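(* Let $s\in\mathbb{C}$. If the integral converges, then \[ \psi(s)=\int_0^1\!\!\int_0^1\frac{(xy)^{s-1}-y}{(1-xy)\log(xy)}\,dx\,dy, \] where $\psi=\Gamma'/\Gamma$ is the digamma function. *)

theory Defs
  imports "HOL-Analysis.Analysis"
begin

end

theory Submission
  imports Defs
begin


lemma inner_scale_nn:
  fixes g :: "real \<Rightarrow> ennreal"
  assumes [measurable]: "g \<in> borel_measurable borel" and y: "0 < y"
  shows "(\<integral>\<^sup>+x. indicator {0..1} x * g (x * y) \<partial>lborel)
       = ennreal (1 / y) * (\<integral>\<^sup>+u. indicator {0..y} u * g u \<partial>lborel)"
proof -
  have "(\<integral>\<^sup>+u. indicator {0..y} u * g u \<partial>lborel)
       = ennreal \<bar>y\<bar> * (\<integral>\<^sup>+x. indicator {0..y} (0 + y * x) * g (0 + y * x) \<partial>lborel)"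
    using y by (intro nn_integral_real_affine) auto
  also have "(\<integral>\<^sup>+x. indicator {0..y} (0 + y * x) * g (0 + y * x) \<partial>lborel)
      = (\<integral>\<^sup>+x. indicator {0..1} x * g (x * y) \<partial>lborel)"
    using y by (intro nn_integral_cong) (auto simp: indicator_def mult.commute zero_le_mult_iff)
  finally show ?thesis using y
    by (simp add: ennreal_mult'[symmetric] mult.assoc[symmetric] flip: ennreal_mult)
qed

lemma core_nn:
  fixes g :: "real \<Rightarrow> ennreal" and h w :: "real \<Rightarrow> real"
  assumes [measurable]: "g \<in> borel_measurable borel" "h \<in> borel_measurable borel"
    and hpos: "\<And>y. 0 \<le> h y"
    and W: "\<And>u. 0 < u \<Longrightarrow> u \<le> 1 \<Longrightarrow>
              (\<integral>\<^sup>+y. indicator {u..1} y * ennreal (h y / y) \<partial>lborel) = ennreal (w u)"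
  shows "(\<integral>\<^sup>+p. indicator ({0..1}\<times>{0..1}) p * ennreal (h (snd p)) * g (fst p * snd p) \<partial>lborel)
       = (\<integral>\<^sup>+u. indicator {0..1} u * ennreal (w u) * g u \<partial>lborel)"
proof -
  let ?K = "\<lambda>u y. ennreal (of_bool (0 < y \<and> y \<le> 1 \<and> 0 \<le> u \<and> u \<le> y) * (h y / y)) * g u"
  have "(\<integral>\<^sup>+p. indicator ({0..1}\<times>{0..1}) p * ennreal (h (snd p)) * g (fst p * snd p) \<partial>lborel)
      = (\<integral>\<^sup>+p. indicator ({0..1}\<times>{0..1}) p * ennreal (h (snd p)) * g (fst p * snd p) \<partial>(lborel \<Otimes>\<^sub>M lborel))"
    by (simp add: lborel_prod)
  also have "\<dots> = (\<integral>\<^sup>+y. \<integral>\<^sup>+x. indicator ({0..1}\<times>{0..1}) (x,y) * ennreal (h y) * g (x * y) \<partial>lborel \<partial>lborel)"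
    by (subst lborel_pair.nn_integral_snd[symmetric]) auto
  also have "\<dots> = (\<integral>\<^sup>+y. \<integral>\<^sup>+u. ?K u y \<partial>lborel \<partial>lborel)"
  proof (rule nn_integral_cong_AE)
    show "AE y in lborel. (\<integral>\<^sup>+x. indicator ({0..1}\<times>{0..1}) (x,y) * ennreal (h y) * g (x * y) \<partial>lborel)
          = (\<integral>\<^sup>+u. ?K u y \<partial>lborel)"
      using AE_lborel_singleton[of 0]
    proof eventually_elim
      case (elim y)
      show ?case
      proof (cases "0 < y \<and> y \<le> 1")
        case True
        have "(\<integral>\<^sup>+x. indicator ({0..1}\<times>{0..1}) (x,y) * ennreal (h y) * g (x * y) \<partial>lborel)
            = (\<integral>\<^sup>+x. ennreal (h y) * (indicator {0..1} x * g (x * y)) \<partial>lborel)"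
          using True by (intro nn_integral_cong) (auto simp: indicator_def mult_ac)
        also have "\<dots> = ennreal (h y) * (ennreal (1 / y) * (\<integral>\<^sup>+u. indicator {0..y} u * g u \<partial>lborel))"
          using True by (subst nn_integral_cmult) (auto simp: inner_scale_nn)
        also have "\<dots> = (\<integral>\<^sup>+u. ennreal (h y * (1/y)) * (indicator {0..y} u * g u) \<partial>lborel)"
        proof -
          have e: "ennreal (h y / y) = ennreal (h y) * ennreal (1/y)"
            using True hpos[of y] ennreal_mult[of "h y" "1/y"] by auto
          show ?thesis by (subst nn_integral_cmult) (auto simp: e mult.assoc)
        qed
        also have "\<dots> = (\<integral>\<^sup>+u. ?K u y \<partial>lborel)"
          using True by (intro nn_integral_cong) (auto simp: indicator_def)
        finally show ?thesis .
      next
        case False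
        then show ?thesis using elim by (auto simp: indicator_def)
      qed
    qed
  qed
  also have "\<dots> = (\<integral>\<^sup>+u. \<integral>\<^sup>+y. ?K u y \<partial>lborel \<partial>lborel)"
    by (rule lborel_pair.Fubini') measurable
  also have "\<dots> = (\<integral>\<^sup>+u. indicator {0..1} u * ennreal (w u) * g u \<partial>lborel)"
  proof (rule nn_integral_cong_AE)
    show "AE u in lborel. (\<integral>\<^sup>+y. ?K u y \<partial>lborel) = indicator {0..1} u * ennreal (w u) * g u"
      using AE_lborel_singleton[of 0]
    proof eventually_elim
      case (elim u)
      show ?case
      proof (cases "0 < u \<and> u \<le> 1")
        case True
        have "(\<integral>\<^sup>+y. ?K u y \<partial>lborel) = (\<integral>\<^sup>+y. (indicator {u..1} y * ennreal (h y / y)) * g u \<partial>lborel)"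
          using True by (intro nn_integral_cong) (auto simp: indicator_def)
        also have "\<dots> = ennreal (w u) * g u"
          using True by (subst nn_integral_multc) (auto simp: W)
        finally show ?thesis using True by (simp add: indicator_def)
      next
        case False
        with elim have z: "?K u y = 0" for y by auto
        have "(\<integral>\<^sup>+y. ?K u y \<partial>lborel) = 0" by (simp only: z) simp
        then show ?thesis using False elim by (auto simp: indicator_def)
      qed
    qed
  qed
  finally show ?thesis .
qed

lemma nn_FTC:
  fixes f F :: "real \<Rightarrow> real"
  assumes "a \<le> b" and cont: "continuous_on {a..b} f"
    and der: "\<And>x. a \<le> x \<Longrightarrow> x \<le> b \<Longrightarrow> (F has_real_derivative f x) (at x within {a..b})"
    and nn: "\<And>x. a \<le> x \<Longrightarrow> x \<le> b \<Longrightarrow> 0 \<le> f x"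
  shows "(\<integral>\<^sup>+y. indicator {a..b} y * ennreal (f y) \<partial>lborel) = ennreal (F b - F a)"
proof -
  have int: "integrable lborel (\<lambda>x. indicator {a..b} x *\<^sub>R f x)"
    using borel_integrable_compact[OF _ cont] by auto
  have "(\<integral>\<^sup>+y. indicator {a..b} y * ennreal (f y) \<partial>lborel)
      = (\<integral>\<^sup>+y. ennreal (indicator {a..b} y *\<^sub>R f y) \<partial>lborel)"
    by (intro nn_integral_cong) (auto simp: indicator_def)
  also have "\<dots> = ennreal (integral\<^sup>L lborel (\<lambda>x. indicator {a..b} x *\<^sub>R f x))"
    using int nn by (intro nn_integral_eq_integral) (auto simp: indicator_def)
  also have "integral\<^sup>L lborel (\<lambda>x. indicator {a..b} x *\<^sub>R f x) = F b - F a"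
    using assms by (intro integral_FTC_atLeastAtMost)
      (auto simp: has_real_derivative_iff_has_vector_derivative[symmetric])
  finally show ?thesis .
qed

lemma W0: "0 < u \<Longrightarrow> u \<le> 1 \<Longrightarrow>
   (\<integral>\<^sup>+y. indicator {u..1} y * ennreal ((\<lambda>_. 1::real) y / y) \<partial>lborel) = ennreal (- ln u)"
proof -
  assume u: "0 < u" "u \<le> 1"
  have c: "continuous_on {u..1} (\<lambda>y::real. 1 / y)" using u by (intro continuous_intros) auto
  have d: "(ln has_real_derivative 1 / x) (at x within {u..1})" if "u \<le> x" for x
    using that u by (auto intro!: derivative_eq_intros)
  show ?thesis using nn_FTC[of u 1 "\<lambda>y. 1 / y" ln, OF u(2) c d] u by simp
qed

lemma W1: "0 < u \<Longrightarrow> u \<le> 1 \<Longrightarrow>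
   (\<integral>\<^sup>+y. indicator {u..1} y * ennreal ((\<lambda>y. y) y / y) \<partial>lborel) = ennreal (1 - u)"
proof -
  assume u: "0 < u" "u \<le> 1"
  have "(\<integral>\<^sup>+y. indicator {u..1} y * ennreal ((\<lambda>y. y) y / y) \<partial>lborel)
      = (\<integral>\<^sup>+y. indicator {u..1} y * ennreal 1 \<partial>lborel)"
    using u by (intro nn_integral_cong) (auto simp: indicator_def)
  also have "\<dots> = ennreal (1 - u)"
    using nn_FTC[of u 1 "\<lambda>y. 1" "\<lambda>y. y"] u
    by (auto intro!: continuous_intros derivative_eq_intros)
  finally show ?thesis .
qed

lemma sq_borel[measurable]: "({0..1::real}\<times>{0..1::real}) \<in> sets borel"
  by (intro borel_closed closed_Times) auto

lemma core_nonneg: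
  fixes q h w :: "real \<Rightarrow> real"
  assumes [measurable]: "q \<in> borel_measurable borel" "h \<in> borel_measurable borel" "w \<in> borel_measurable borel"
    and qpos: "\<And>u. 0 \<le> q u" and hpos: "\<And>y. 0 \<le> h y"
    and wpos: "\<And>u. 0 \<le> u \<Longrightarrow> u \<le> 1 \<Longrightarrow> 0 \<le> w u"
    and W: "\<And>u. 0 < u \<Longrightarrow> u \<le> 1 \<Longrightarrow>
              (\<integral>\<^sup>+y. indicator {u..1} y * ennreal (h y / y) \<partial>lborel) = ennreal (w u)"
    and I: "has_bochner_integral lborel (\<lambda>u. indicator {0..1} u * (w u * q u)) I"
  shows "has_bochner_integral lborel (\<lambda>p. indicator ({0..1}\<times>{0..1}) p * (h (snd p) * q (fst p * snd p))) I"
proof -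
  have int: "integrable lborel (\<lambda>u. indicator {0..1} u * (w u * q u))" and Iv: "integral\<^sup>L lborel (\<lambda>u. indicator {0..1} u * (w u * q u)) = I"
    using I by (auto simp: has_bochner_integral_iff)
  have nn1: "AE u in lborel. 0 \<le> indicator {0..1} u * (w u * q u)"
    using wpos qpos by (auto simp: indicator_def)
  have I0: "0 \<le> I" using Iv integral_nonneg_AE[OF nn1] by simp
  have "(\<integral>\<^sup>+u. ennreal (indicator {0..1} u * (w u * q u)) \<partial>lborel) = ennreal I"
    using nn_integral_eq_integral[OF int nn1] Iv by simp
  moreover have "(\<integral>\<^sup>+u. ennreal (indicator {0..1} u * (w u * q u)) \<partial>lborel)
      = (\<integral>\<^sup>+u. indicator {0..1} u * ennreal (w u) * ennreal (q u) \<partial>lborel)"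
    using wpos qpos by (intro nn_integral_cong) (auto simp: indicator_def ennreal_mult)
  moreover have "(\<integral>\<^sup>+p. ennreal (indicator ({0..1}\<times>{0..1}) p * (h (snd p) * q (fst p * snd p))) \<partial>lborel)
      = (\<integral>\<^sup>+p. indicator ({0..1}\<times>{0..1}) p * ennreal (h (snd p)) * ennreal (q (fst p * snd p)) \<partial>lborel)"
    using hpos qpos by (intro nn_integral_cong) (auto simp: indicator_def ennreal_mult)
  moreover have "(\<integral>\<^sup>+p. indicator ({0..1}\<times>{0..1}) p * ennreal (h (snd p)) * ennreal (q (fst p * snd p)) \<partial>lborel)
      = (\<integral>\<^sup>+u. indicator {0..1} u * ennreal (w u) * ennreal (q u) \<partial>lborel)"
    by (rule core_nn[OF _ _ hpos W]) auto
  ultimately have E: "(\<integral>\<^sup>+p. ennreal (indicator ({0..1}\<times>{0..1}) p * (h (snd p) * q (fst p * snd p))) \<partial>lborel) = ennreal I"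
    by simp
  have m: "(\<lambda>p::real\<times>real. indicator ({0..1}\<times>{0..1}) p * (h (snd p) * q (fst p * snd p))) \<in> borel_measurable lborel"
    unfolding measurable_lborel2 borel_prod[symmetric] by measurable
  show ?thesis
    apply (rule has_bochner_integral_nn_integral[OF m _ I0 E])
    using hpos qpos I0 by (auto simp: indicator_def)
qed

lemma core_real:
  fixes q h w :: "real \<Rightarrow> real"
  assumes [measurable]: "q \<in> borel_measurable borel" "h \<in> borel_measurable borel" "w \<in> borel_measurable borel"
    and hpos: "\<And>y. 0 \<le> h y"
    and wpos: "\<And>u. 0 \<le> u \<Longrightarrow> u \<le> 1 \<Longrightarrow> 0 \<le> w u"
    and W: "\<And>u. 0 < u \<Longrightarrow> u \<le> 1 \<Longrightarrow>
              (\<integral>\<^sup>+y. indicator {u..1} y * ennreal (h y / y) \<partial>lborel) = ennreal (w u)"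
    and I: "has_bochner_integral lborel (\<lambda>u. indicator {0..1} u * (w u * q u)) I"
  shows "has_bochner_integral lborel (\<lambda>p. indicator ({0..1}\<times>{0..1}) p * (h (snd p) * q (fst p * snd p))) I"
proof -
  let ?F = "\<lambda>u. indicator {0..1} u * (w u * q u)"
  have int: "integrable lborel ?F" and Iv: "integral\<^sup>L lborel ?F = I"
    using I by (auto simp: has_bochner_integral_iff)
  have e1: "(\<lambda>u. indicator {0..1} u * (w u * max (q u) 0)) = (\<lambda>u. max (?F u) 0)"
  proof (rule ext)
    fix u show "indicator {0..1} u * (w u * max (q u) 0) = max (indicator {0..1} u * (w u * q u)) 0"
      using wpos[of u] by (cases "0 \<le> u \<and> u \<le> 1") (auto simp: indicator_def max_def mult_le_0_iff zero_le_mult_iff)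
  qed
  have e2: "(\<lambda>u. indicator {0..1} u * (w u * max (- q u) 0)) = (\<lambda>u. max (- ?F u) 0)"
  proof (rule ext)
    fix u show "indicator {0..1} u * (w u * max (- q u) 0) = max (- (indicator {0..1} u * (w u * q u))) 0"
      using wpos[of u] by (cases "0 \<le> u \<and> u \<le> 1") (auto simp: indicator_def max_def mult_le_0_iff zero_le_mult_iff)
  qed
  have i1: "integrable lborel (\<lambda>u. indicator {0..1} u * (w u * max (q u) 0))"
    unfolding e1 using int by (intro integrable_max) auto
  have i2: "integrable lborel (\<lambda>u. indicator {0..1} u * (w u * max (- q u) 0))"
    unfolding e2 using int by (intro integrable_max) auto
  have A: "has_bochner_integral lborel (\<lambda>p. indicator ({0..1}\<times>{0..1}) p * (h (snd p) * max (q (fst p * snd p)) 0))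
      (integral\<^sup>L lborel (\<lambda>u. indicator {0..1} u * (w u * max (q u) 0)))"
    by (rule core_nonneg[OF _ _ _ _ hpos wpos W]) (use i1 in \<open>auto simp: has_bochner_integral_iff\<close>)
  have B: "has_bochner_integral lborel (\<lambda>p. indicator ({0..1}\<times>{0..1}) p * (h (snd p) * max (- q (fst p * snd p)) 0))
      (integral\<^sup>L lborel (\<lambda>u. indicator {0..1} u * (w u * max (- q u) 0)))"
    by (rule core_nonneg[OF _ _ _ _ hpos wpos W]) (use i2 in \<open>auto simp: has_bochner_integral_iff\<close>)
  have "integral\<^sup>L lborel (\<lambda>u. indicator {0..1} u * (w u * max (q u) 0)) - integral\<^sup>L lborel (\<lambda>u. indicator {0..1} u * (w u * max (- q u) 0))
      = integral\<^sup>L lborel (\<lambda>u. indicator {0..1} u * (w u * max (q u) 0) - indicator {0..1} u * (w u * max (- q u) 0))"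
    using i1 i2 by (rule Bochner_Integration.integral_diff[symmetric])
  also have "\<dots> = I"
    unfolding Iv[symmetric] by (intro Bochner_Integration.integral_cong) (auto simp: max_def algebra_simps)
  finally have Ie: "integral\<^sup>L lborel (\<lambda>u. indicator {0..1} u * (w u * max (q u) 0)) - integral\<^sup>L lborel (\<lambda>u. indicator {0..1} u * (w u * max (- q u) 0)) = I" .
  have "has_bochner_integral lborel (\<lambda>p. indicator ({0..1}\<times>{0..1}) p * (h (snd p) * max (q (fst p * snd p)) 0)
        - indicator ({0..1}\<times>{0..1}) p * (h (snd p) * max (- q (fst p * snd p)) 0)) I"
    using has_bochner_integral_diff[OF A B] Ie by simp
  then show ?thesis
    by (rule has_bochner_integral_cong[OF refl _ refl, THEN iffD1, rotated]) (auto simp: max_def algebra_simps)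
qed

lemma core_complex:
  fixes f :: "real \<Rightarrow> complex" and h w :: "real \<Rightarrow> real"
  assumes [measurable]: "f \<in> borel_measurable borel" "h \<in> borel_measurable borel" "w \<in> borel_measurable borel"
    and hpos: "\<And>y. 0 \<le> h y"
    and wpos: "\<And>u. 0 \<le> u \<Longrightarrow> u \<le> 1 \<Longrightarrow> 0 \<le> w u"
    and W: "\<And>u. 0 < u \<Longrightarrow> u \<le> 1 \<Longrightarrow>
              (\<integral>\<^sup>+y. indicator {u..1} y * ennreal (h y / y) \<partial>lborel) = ennreal (w u)"
    and I: "has_bochner_integral lborel (\<lambda>u. indicator {0..1} u *\<^sub>R (w u *\<^sub>R f u)) I"
  shows "has_bochner_integral lborel (\<lambda>p. indicator ({0..1}\<times>{0..1}) p *\<^sub>R (h (snd p) *\<^sub>R f (fst p * snd p))) I"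
proof -
  have R: "has_bochner_integral lborel (\<lambda>u. indicator {0..1} u * (w u * Re (f u))) (Re I)"
    using has_bochner_integral_Re[OF I] by (simp add: mult.assoc)
  have Im: "has_bochner_integral lborel (\<lambda>u. indicator {0..1} u * (w u * Im (f u))) (Im I)"
    using has_bochner_integral_Im[OF I] by (simp add: mult.assoc)
  have R2: "has_bochner_integral lborel (\<lambda>p. indicator ({0..1}\<times>{0..1}) p * (h (snd p) * Re (f (fst p * snd p)))) (Re I)"
    by (rule core_real[OF _ _ _ hpos wpos W R]) auto
  have I2: "has_bochner_integral lborel (\<lambda>p. indicator ({0..1}\<times>{0..1}) p * (h (snd p) * Im (f (fst p * snd p)))) (Im I)"
    by (rule core_real[OF _ _ _ hpos wpos W Im]) auto
  have hb: "has_bochner_integral lborel (\<lambda>p. complex_of_real (indicator ({0..1}\<times>{0..1}) p * (h (snd p) * Re (f (fst p * snd p))))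
     + \<i> * complex_of_real (indicator ({0..1}\<times>{0..1}) p * (h (snd p) * Im (f (fst p * snd p))))) (of_real (Re I) + \<i> * of_real (Im I))"
    by (intro has_bochner_integral_add has_bochner_integral_mult_right has_bochner_integral_of_real R2 I2)
  have X: "complex_of_real (Re I) + \<i> * complex_of_real (Im I) = I"
    by (simp add: complex_eq_iff)
  show ?thesis using hb
    by (rule has_bochner_integral_cong[OF refl _ X, THEN iffD1, rotated])
       (auto simp: complex_eq_iff indicator_def)
qed

definition pw :: "complex \<Rightarrow> real \<Rightarrow> complex" where
  "pw a u = (if u \<in> {0<..} then complex_of_real u powr a else 0)"

lemma pw_measurable[measurable]: "pw a \<in> borel_measurable borel"
  unfolding pw_def
  by (rule borel_measurable_continuous_on_if) (auto intro!: continuous_intros)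

lemma norm_pw: "0 < u \<Longrightarrow> norm (pw a u) = u powr Re a"
  by (simp add: pw_def norm_powr_real_powr)

lemma pow_int:
  assumes a: "Re a > -1"
  shows "has_bochner_integral lborel (\<lambda>u. indicator {0..1} u *\<^sub>R pw a u) (1 / (a + 1))"
proof -
  have a0: "a + 1 \<noteq> 0" using a by (auto simp: complex_eq_iff)
  have H: "((\<lambda>u. complex_of_real u powr a) has_integral (of_real 1 powr (a+1) / (a+1) - of_real 0 powr (a+1) / (a+1))) {0..1}"
    using a
    by (intro fundamental_theorem_of_calculus_interior)
       (auto intro!: continuous_intros derivative_eq_intros has_vector_derivative_real_field simp: a0)
  have H1: "((\<lambda>u. indicator {0..1} u *\<^sub>R pw a u) has_integral (1 / (a + 1))) UNIV"
  proof -
    have "((\<lambda>u. pw a u) has_integral (1 / (a + 1))) {0..1}"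
    proof -
      have H': "((\<lambda>u. complex_of_real u powr a) has_integral (1 / (a + 1))) {0..1}"
        using H by simp
      show ?thesis by (rule has_integral_spike[OF negligible_sing[of 0] _ H']) (auto simp: pw_def)
    qed
    moreover have e: "(\<lambda>u. indicator {0..1} u *\<^sub>R pw a u) = (\<lambda>u. if u \<in> {0..1} then pw a u else 0)"
      by (auto simp: fun_eq_iff indicator_def)
    ultimately show ?thesis
      unfolding e has_integral_restrict_UNIV by simp
  qed
  have m: "(\<lambda>u. indicator {0..1} u *\<^sub>R pw a u) \<in> borel_measurable lborel" by measurable
  have nn: "(\<integral>\<^sup>+u. ennreal (norm (indicator {0..1} u *\<^sub>R pw a u)) \<partial>lborel)
      = (\<integral>\<^sup>+u. ennreal (indicator {0..1} u * u powr Re a) \<partial>lborel)"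
    by (intro nn_integral_cong_AE, use AE_lborel_singleton[of 0] in eventually_elim)
       (auto simp: indicator_def norm_pw)
  also have "\<dots> = ennreal (1 / (Re a + 1))"
  proof (rule nn_integral_has_integral_lborel)
    show "((\<lambda>u. indicator {0..1} u * u powr Re a) has_integral 1 / (Re a + 1)) UNIV"
    proof -
      have e: "(\<lambda>u. indicator {0..1} u * u powr Re a) = (\<lambda>u. if u \<in> {0..1} then u powr Re a else 0)"
        by (auto simp: fun_eq_iff indicator_def)
      show ?thesis
        unfolding e has_integral_restrict_UNIV using has_integral_powr_from_0[of "Re a" 1] a by simp
    qed
  qed (auto simp: indicator_def)
  finally have "integrable lborel (\<lambda>u. indicator {0..1} u *\<^sub>R pw a u)"
    using m by (auto simp: integrable_iff_bounded)
  then have "((\<lambda>u. indicator {0..1} u *\<^sub>R pw a u) has_integral integral\<^sup>L lborel (\<lambda>u. indicator {0..1} u *\<^sub>R pw a u)) UNIV"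
    and i: "integrable lborel (\<lambda>u. indicator {0..1} u *\<^sub>R pw a u)"
    by (auto intro: has_integral_integral_lborel)
  with H1 have "integral\<^sup>L lborel (\<lambda>u. indicator {0..1} u *\<^sub>R pw a u) = 1 / (a + 1)"
    using has_integral_unique by blast
  with i show ?thesis by (simp add: has_bochner_integral_iff)
qed

lemma inner_powr_nn:
  assumes t: "0 \<le> t"
  shows "(\<integral>\<^sup>+u. ennreal (indicator {0..1} u * u powr t) \<partial>lborel) = ennreal (1 / (t + 1))"
proof (rule nn_integral_has_integral_lborel)
  have e: "(\<lambda>u. indicator {0..1} u * u powr t) = (\<lambda>u. if u \<in> {0..1} then u powr t else 0)"
    by (auto simp: fun_eq_iff indicator_def)
  show "((\<lambda>u. indicator {0..1} u * u powr t) has_integral 1 / (t + 1)) UNIV"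
    unfolding e has_integral_restrict_UNIV using has_integral_powr_from_0[of t 1] t by simp
qed (auto simp: indicator_def)

lemma frull_pt:
  assumes u: "0 < u" "u < 1"
  shows "(\<integral>\<^sup>+t. indicator {0..real N} t * ennreal (u powr t) \<partial>lborel) = ennreal ((1 - u ^ N) / (- ln u))"
proof -
  have lu: "ln u < 0" using u by simp
  have "(\<integral>\<^sup>+t. indicator {0..real N} t * ennreal (u powr t) \<partial>lborel)
      = ennreal (exp (real N * ln u) / ln u - exp (0 * ln u) / ln u)"
  proof (rule nn_FTC)
    show "continuous_on {0..real N} (\<lambda>t. u powr t)" using u by (intro continuous_intros) auto
    fix x assume "0 \<le> x" "x \<le> real N"
    show "((\<lambda>t. exp (t * ln u) / ln u) has_real_derivative u powr x) (at x within {0..real N})"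
      using u lu by (auto intro!: derivative_eq_intros simp: powr_def)
  qed auto
  also have "exp (real N * ln u) / ln u - exp (0 * ln u) / ln u = (1 - u ^ N) / (- ln u)"
    using u lu by (simp add: exp_of_nat_mult field_simps)
  finally show ?thesis .
qed

lemma frull:
  "has_bochner_integral lborel (\<lambda>u. indicator {0..1} u * ((1 - u ^ N) / ln u)) (- ln (real N + 1))"
proof -
  let ?phi = "\<lambda>u::real. indicator {0..1} u * ((1 - u ^ N) / (- ln u))"
  have phipos: "0 \<le> ?phi u" for u
  proof (cases "0 < u \<and> u < 1")
    case True
    then have "0 \<le> 1 - u ^ N" by (simp add: power_le_one)
    moreover have "0 < - ln u" using True by simp
    ultimately have "0 \<le> (1 - u ^ N) / (- ln u)" by (intro divide_nonneg_pos)
    then show ?thesis by (simp add: indicator_def)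
  next
    case False
    then show ?thesis by (cases "u = 1") (auto simp: indicator_def)
  qed
  have "(\<integral>\<^sup>+u. ennreal (?phi u) \<partial>lborel)
      = (\<integral>\<^sup>+u. \<integral>\<^sup>+t. ennreal (indicator {0..1} u * u powr t) * indicator {0..real N} t \<partial>lborel \<partial>lborel)"
  proof (rule nn_integral_cong_AE)
    show "AE u in lborel. ennreal (?phi u) = (\<integral>\<^sup>+t. ennreal (indicator {0..1} u * u powr t) * indicator {0..real N} t \<partial>lborel)"
      using AE_lborel_singleton[of 0] AE_lborel_singleton[of 1]
    proof eventually_elim
      case (elim u)
      show ?case
      proof (cases "0 < u \<and> u < 1")
        case True
        have "(\<integral>\<^sup>+t. ennreal (indicator {0..1} u * u powr t) * indicator {0..real N} t \<partial>lborel)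
            = (\<integral>\<^sup>+t. indicator {0..real N} t * ennreal (u powr t) \<partial>lborel)"
          using True by (intro nn_integral_cong) (auto simp: indicator_def)
        also have "\<dots> = ennreal ((1 - u ^ N) / (- ln u))" using True by (intro frull_pt) auto
        finally show ?thesis using True by (simp add: indicator_def)
      next
        case False
        with elim have "u < 0 \<or> u > 1" by auto
        then show ?thesis by (auto simp: indicator_def)
      qed
    qed
  qed
  also have "\<dots> = (\<integral>\<^sup>+t. \<integral>\<^sup>+u. ennreal (indicator {0..1} u * u powr t) * indicator {0..real N} t \<partial>lborel \<partial>lborel)"
    by (rule lborel_pair.Fubini'[symmetric]) measurable
  also have "\<dots> = (\<integral>\<^sup>+t. indicator {0..real N} t * ennreal (1 / (t + 1)) \<partial>lborel)"
  proof (rule nn_integral_cong)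
    fix t :: real
    show "(\<integral>\<^sup>+u. ennreal (indicator {0..1} u * u powr t) * indicator {0..real N} t \<partial>lborel)
        = indicator {0..real N} t * ennreal (1 / (t + 1))"
    proof (cases "0 \<le> t")
      case True
      have "(\<integral>\<^sup>+u. ennreal (indicator {0..1} u * u powr t) * indicator {0..real N} t \<partial>lborel)
          = (\<integral>\<^sup>+u. ennreal (indicator {0..1} u * u powr t) \<partial>lborel) * indicator {0..real N} t"
        by (rule nn_integral_multc) measurable
      then show ?thesis using inner_powr_nn[OF True] by (simp add: mult.commute)
    next
      case False
      then show ?thesis by (auto simp: indicator_def)
    qed
  qed
  also have "\<dots> = ennreal (ln (real N + 1) - ln (0 + 1))"
    by (rule nn_FTC) (auto intro!: continuous_intros derivative_eq_intros)
  finally have E: "(\<integral>\<^sup>+u. ennreal (?phi u) \<partial>lborel) = ennreal (ln (real N + 1))" by simp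
  have "has_bochner_integral lborel ?phi (ln (real N + 1))"
    by (rule has_bochner_integral_nn_integral[OF _ _ _ E]) (use phipos in auto)
  from has_bochner_integral_minus[OF this]
  show ?thesis by (simp add: divide_simps)
qed

lemma ln_nonpos01: "0 \<le> u \<Longrightarrow> u \<le> (1::real) \<Longrightarrow> ln u \<le> 0"
  by (cases "u = 0") auto

definition cN :: "nat \<Rightarrow> real \<Rightarrow> real" where
  "cN N u = (1 - u ^ N) / ((1 - u) * ln u)"

lemma cN_measurable[measurable]: "cN N \<in> borel_measurable borel"
  unfolding cN_def by measurable

lemma W1': "0 < u \<Longrightarrow> u \<le> 1 \<Longrightarrow>
   (\<integral>\<^sup>+y. indicator {u..1} y * ennreal ((\<lambda>y. max y 0) y / y) \<partial>lborel) = ennreal (1 - u)"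
proof -
  assume u: "0 < u" "u \<le> 1"
  have "(\<integral>\<^sup>+y. indicator {u..1} y * ennreal ((\<lambda>y. max y 0) y / y) \<partial>lborel)
      = (\<integral>\<^sup>+y. indicator {u..1} y * ennreal ((\<lambda>y. y) y / y) \<partial>lborel)"
    using u by (intro nn_integral_cong) (auto simp: indicator_def)
  then show ?thesis using W1[OF u] by simp
qed

lemma B_int:
  "has_bochner_integral lborel (\<lambda>p. indicator ({0..1}\<times>{0..1}) p * (max (snd p) 0 * cN N (fst p * snd p)))
      (- ln (real N + 1))"
proof (rule core_real[where w = "\<lambda>u. 1 - u"])
  show "has_bochner_integral lborel (\<lambda>u. indicator {0..1} u * ((1 - u) * cN N u)) (- ln (real N + 1))"
    using frull[of N]
    by (rule has_bochner_integral_cong[OF refl _ refl, THEN iffD1, rotated])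
       (auto simp: cN_def indicator_def)
qed (auto intro: W1')

lemma A_int:
  assumes s: "0 < Re s"
  shows "has_bochner_integral lborel
     (\<lambda>p. indicator ({0..1}\<times>{0..1}) p *\<^sub>R ((\<lambda>_. 1) (snd p) *\<^sub>R (pw (s - 1) (fst p * snd p) * complex_of_real (cN N (fst p * snd p)))))
     (- (\<Sum>n<N. 1 / (s + of_nat n)))"
proof (rule core_complex[where w = "\<lambda>u. - ln u"])
  have sum: "has_bochner_integral lborel (\<lambda>u. - (\<Sum>n<N. indicator {0..1} u *\<^sub>R pw (s - 1 + of_nat n) u))
        (- (\<Sum>n<N. 1 / (s - 1 + of_nat n + 1)))"
    using s by (intro has_bochner_integral_minus has_bochner_integral_sum pow_int) auto
  have "has_bochner_integral lborel (\<lambda>u. indicator {0..1} u *\<^sub>R ((- ln u) *\<^sub>R (pw (s - 1) u * complex_of_real (cN N u))))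
        (- (\<Sum>n<N. 1 / (s - 1 + of_nat n + 1)))"
  proof (rule has_bochner_integral_cong_AE[THEN iffD1, OF _ _ _ sum])
    show "AE u in lborel. - (\<Sum>n<N. indicator {0..1} u *\<^sub>R pw (s - 1 + of_nat n) u)
        = indicator {0..1} u *\<^sub>R ((- ln u) *\<^sub>R (pw (s - 1) u * complex_of_real (cN N u)))"
      using AE_lborel_singleton[of 1]
    proof eventually_elim
      case (elim u)
      show ?case
      proof (cases "0 < u \<and> u < 1")
        case True
        then have l: "ln u \<noteq> 0" "1 - u \<noteq> 0" by auto
        have "(\<Sum>n<N. pw (s - 1 + of_nat n) u) = pw (s - 1) u * (\<Sum>n<N. complex_of_real u ^ n)"
          using True by (simp add: pw_def powr_add powr_nat' sum_distrib_left)
        also have "(\<Sum>n<N. complex_of_real u ^ n) = complex_of_real ((1 - u ^ N) / (1 - u))"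
          using True by (simp add: sum_gp_strict)
        finally have e: "(\<Sum>n<N. pw (s - 1 + of_nat n) u) = pw (s - 1) u * complex_of_real ((1 - u ^ N) / (1 - u))" .
        have h1: "ln u * cN N u = (1 - u ^ N) / (1 - u)"
          using l by (simp add: cN_def field_simps)
        have h2: "complex_of_real (ln u) * complex_of_real (cN N u) = complex_of_real ((1 - u ^ N) / (1 - u))"
          by (metis of_real_mult h1)
        have "(- ln u) *\<^sub>R (pw (s - 1) u * complex_of_real (cN N u))
            = - ((complex_of_real (ln u) * complex_of_real (cN N u)) * pw (s - 1) u)"
          by (simp add: scaleR_conv_of_real mult_ac)
        also have "\<dots> = - (pw (s - 1) u * complex_of_real ((1 - u ^ N) / (1 - u)))"
          by (simp only: h2 mult.commute)
        finally have "(- ln u) *\<^sub>R (pw (s - 1) u * complex_of_real (cN N u)) = - (pw (s - 1) u * complex_of_real ((1 - u ^ N) / (1 - u)))" .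
        then show ?thesis using True e by (simp add: indicator_def sum_negf)
      next
        case False
        then have "u \<notin> {0<..<1}" by auto
        then show ?thesis using elim by (auto simp: indicator_def pw_def)
      qed
    qed
  qed measurable
  then show "has_bochner_integral lborel (\<lambda>u. indicator {0..1} u *\<^sub>R ((- ln u) *\<^sub>R (pw (s - 1) u * complex_of_real (cN N u))))
        (- (\<Sum>n<N. 1 / (s + of_nat n)))"
    by (simp add: algebra_simps)
qed (auto intro: W0 ln_nonpos01)

definition Gf :: "complex \<Rightarrow> real \<times> real \<Rightarrow> complex" where
  "Gf s = (\<lambda>(x, y). ((complex_of_real (x * y)) powr (s - 1) - complex_of_real y)
                        / complex_of_real ((1 - x * y) * ln (x * y)))"

lemma decomp:
  assumes p: "p \<in> {0..1}\<times>{0..1}"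
  shows "(1 - complex_of_real ((fst p * snd p) ^ N)) * Gf s p
       = pw (s - 1) (fst p * snd p) * complex_of_real (cN N (fst p * snd p))
         - complex_of_real (max (snd p) 0 * cN N (fst p * snd p))"
proof -
  obtain x y where xy: "p = (x, y)" by (cases p)
  with p have x: "0 \<le> x" "x \<le> 1" and y: "0 \<le> y" "y \<le> 1" by auto
  have u0: "0 \<le> x * y" and u1: "x * y \<le> 1" using x y by (auto intro: mult_le_one)
  show ?thesis
  proof (cases "x * y = 0 \<or> x * y = 1")
    case True
    then show ?thesis using y by (auto simp: xy Gf_def cN_def pw_def)
  next
    case False
    with u0 u1 have u: "0 < x * y" "x * y < 1" by linarith+
    have D: "(1 - x * y) * ln (x * y) \<noteq> 0" using u by auto
    have D': "complex_of_real ((1 - x * y) * ln (x * y)) \<noteq> 0" using D of_real_eq_0_iff by metis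
    define P where "P = complex_of_real (x * y) powr (s - 1)"
    define c where "c = complex_of_real (1 - (x * y) ^ N)"
    define D where "D = complex_of_real ((1 - x * y) * ln (x * y))"
    have cD: "c / D = complex_of_real (cN N (x * y))"
      by (simp add: c_def D_def cN_def of_real_divide del: of_real_mult of_real_diff of_real_power)
    have "(1 - complex_of_real ((x * y) ^ N)) * Gf s (x, y) = (P - complex_of_real y) * c / D"
    proof -
      have "1 - complex_of_real ((x * y) ^ N) = c" by (simp add: c_def)
      then show ?thesis by (simp add: Gf_def P_def D_def del: of_real_mult of_real_diff of_real_power)
    qed
    also have "\<dots> = P * (c / D) - complex_of_real y * (c / D)"
      by (simp add: algebra_simps diff_divide_distrib)
    also have "\<dots> = pw (s - 1) (x * y) * complex_of_real (cN N (x * y)) - complex_of_real (max y 0 * cN N (x * y))"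
      using u y by (simp add: cD P_def pw_def max_def)
    finally show ?thesis by (simp add: xy)
  qed
qed

lemma Re_pos:
  assumes int: "integrable lborel (\<lambda>p. indicator ({0..1}\<times>{0..1}) p *\<^sub>R Gf s p)"
  shows "0 < Re s"
proof (rule ccontr)
  assume "\<not> 0 < Re s"
  then have sig: "Re s - 1 \<le> -1" by simp
  let ?S = "{0..1::real}\<times>{0..1::real}"
  let ?F = "\<lambda>p. indicator ?S p *\<^sub>R Gf s p"
  have mF: "?F \<in> borel_measurable lborel" using int by auto
  have mc: "(\<lambda>p::real\<times>real. 1 - complex_of_real (fst p * snd p)) \<in> borel_measurable lborel"
    by (simp, rule borel_measurable_continuous_onI, intro continuous_intros)
  have T: "integrable lborel (\<lambda>p. (1 - complex_of_real (fst p * snd p)) * ?F p)"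
  proof (rule Bochner_Integration.integrable_bound[OF int])
    show "(\<lambda>p. (1 - complex_of_real (fst p * snd p)) * ?F p) \<in> borel_measurable lborel"
      using mc mF by (rule borel_measurable_times)
    show "AE p in lborel. norm ((1 - complex_of_real (fst p * snd p)) * ?F p) \<le> norm (?F p)"
    proof (rule AE_I2)
      fix p :: "real \<times> real"
      show "norm ((1 - complex_of_real (fst p * snd p)) * ?F p) \<le> norm (?F p)"
      proof (cases "p \<in> ?S")
        case True
        then have "0 \<le> fst p * snd p" "fst p * snd p \<le> 1" by (auto intro: mult_le_one)
        moreover have "1 - complex_of_real (fst p * snd p) = complex_of_real (1 - fst p * snd p)" by simp
        ultimately have "norm (1 - complex_of_real (fst p * snd p)) \<le> 1"
          by (simp only: norm_of_real)
        then show ?thesis using True by (simp add: norm_mult mult_left_le_one_le indicator_def)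
      qed simp
    qed
  qed
  have B: "integrable lborel (\<lambda>p. complex_of_real (indicator ?S p * (max (snd p) 0 * cN 1 (fst p * snd p))))"
    using has_bochner_integral_of_real[OF B_int[of 1]] by (auto simp: has_bochner_integral_iff)
  have A: "integrable lborel (\<lambda>p. indicator ?S p *\<^sub>R (pw (s - 1) (fst p * snd p) * complex_of_real (cN 1 (fst p * snd p))))"
  proof -
    have "integrable lborel (\<lambda>p. (1 - complex_of_real (fst p * snd p)) * ?F p
        + complex_of_real (indicator ?S p * (max (snd p) 0 * cN 1 (fst p * snd p))))"
      using T B by (rule Bochner_Integration.integrable_add)
    moreover have "(1 - complex_of_real (fst p * snd p)) * ?F p
        + complex_of_real (indicator ?S p * (max (snd p) 0 * cN 1 (fst p * snd p)))
      = indicator ?S p *\<^sub>R (pw (s - 1) (fst p * snd p) * complex_of_real (cN 1 (fst p * snd p)))" for p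
    proof (cases "p \<in> ?S")
      case True
      from decomp[OF True, of 1 s] show ?thesis using True by (simp add: algebra_simps)
    qed simp
    ultimately show ?thesis by simp
  qed
  then have fin: "(\<integral>\<^sup>+p. ennreal (norm (indicator ?S p *\<^sub>R (pw (s - 1) (fst p * snd p) * complex_of_real (cN 1 (fst p * snd p))))) \<partial>lborel) < \<infinity>"
    by (auto simp: integrable_iff_bounded)
  have "(\<integral>\<^sup>+p. ennreal (norm (indicator ?S p *\<^sub>R (pw (s - 1) (fst p * snd p) * complex_of_real (cN 1 (fst p * snd p))))) \<partial>lborel)
     = (\<integral>\<^sup>+p. indicator ?S p * ennreal ((\<lambda>_. 1) (snd p)) * ennreal (norm (pw (s - 1) (fst p * snd p) * complex_of_real (cN 1 (fst p * snd p)))) \<partial>lborel)"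
    by (intro nn_integral_cong) (auto simp: indicator_def)
  also have "\<dots> = (\<integral>\<^sup>+u. indicator {0..1} u * ennreal (- ln u) * ennreal (norm (pw (s - 1) u * complex_of_real (cN 1 u))) \<partial>lborel)"
    by (rule core_nn) (auto intro: W0)
  also have "\<dots> = (\<integral>\<^sup>+u. indicator {0..1} u * ennreal (u powr (Re s - 1)) \<partial>lborel)"
  proof (rule nn_integral_cong_AE)
    show "AE u in lborel. indicator {0..1} u * ennreal (- ln u) * ennreal (norm (pw (s - 1) u * complex_of_real (cN 1 u)))
        = indicator {0..1} u * ennreal (u powr (Re s - 1))"
      using AE_lborel_singleton[of 0] AE_lborel_singleton[of 1]
    proof eventually_elim
      case (elim u)
      show ?case
      proof (cases "0 < u \<and> u < 1")
        case True
        then have l: "ln u < 0" by simp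
        have "cN 1 u = 1 / ln u" using True by (simp add: cN_def)
        have "(- ln u) * norm (pw (s - 1) u * complex_of_real (cN 1 u)) = u powr (Re s - 1)"
        proof -
          have a: "\<bar>ln u\<bar> = - ln u" using l by simp
          show ?thesis using True l \<open>cN 1 u = 1 / ln u\<close>
            by (simp add: norm_mult norm_divide norm_pw a)
        qed
        then have "ennreal (- ln u) * ennreal (norm (pw (s - 1) u * complex_of_real (cN 1 u))) = ennreal (u powr (Re s - 1))"
          using l by (simp add: ennreal_mult[symmetric])
        then show ?thesis using True by (simp add: indicator_def mult.assoc)
      next
        case False
        with elim have "u < 0 \<or> 1 < u" by auto
        then show ?thesis by (auto simp: indicator_def)
      qed
    qed
  qed
  finally have K: "(\<integral>\<^sup>+u. indicator {0..1} u * ennreal (u powr (Re s - 1)) \<partial>lborel) < \<infinity>"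
    using fin by simp
  then obtain r where r: "0 \<le> r" "(\<integral>\<^sup>+u. indicator {0..1} u * ennreal (u powr (Re s - 1)) \<partial>lborel) = ennreal r"
    using less_top_ennreal by auto
  define e where "e = exp (- (r + 1))"
  have e: "0 < e" "e \<le> 1" using r(1) by (auto simp: e_def)
  have "ennreal (r + 1) = ennreal (- ln e)" by (simp add: e_def add.commute)
  also have "\<dots> = (\<integral>\<^sup>+y. indicator {e..1} y * ennreal ((\<lambda>_. 1::real) y / y) \<partial>lborel)"
    using W0[OF e] by simp
  also have "\<dots> \<le> (\<integral>\<^sup>+u. indicator {0..1} u * ennreal (u powr (Re s - 1)) \<partial>lborel)"
  proof (rule nn_integral_mono)
    fix u :: real
    show "indicator {e..1} u * ennreal ((\<lambda>_. 1::real) u / u) \<le> indicator {0..1} u * ennreal (u powr (Re s - 1))"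
    proof (cases "e \<le> u \<and> u \<le> 1")
      case True
      then have u: "0 < u" "u \<le> 1" using e by auto
      have "1 / u = u powr (-1)" using u by (simp add: powr_minus_divide)
      also have "\<dots> \<le> u powr (Re s - 1)" using u sig by (intro powr_mono') auto
      finally show ?thesis using True u by (auto simp: indicator_def intro: ennreal_leI)
    qed (auto simp: indicator_def)
  qed
  finally have "ennreal (r + 1) \<le> ennreal r" using r(2) by simp
  then show False using r(1) by (simp add: ennreal_le_iff)
qed

lemma tailL:
  fixes F :: "real \<times> real \<Rightarrow> complex"
  assumes int: "integrable lborel F"
    and F0: "\<And>p. p \<notin> {0..1}\<times>{0..1} \<Longrightarrow> F p = 0"
    and F1: "\<And>p. fst p * snd p = 1 \<Longrightarrow> F p = 0"
  shows "(\<lambda>N. integral\<^sup>L lborel (\<lambda>p. complex_of_real ((fst p * snd p) ^ N) * F p)) \<longlonglongrightarrow> 0"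
proof -
  have mF: "F \<in> borel_measurable lborel" using int by auto
  have mpow: "(\<lambda>p::real\<times>real. complex_of_real ((fst p * snd p) ^ N)) \<in> borel_measurable lborel" for N
    by (simp, rule borel_measurable_continuous_onI, intro continuous_intros)
  have m1: "(\<lambda>p. complex_of_real ((fst p * snd p) ^ N) * F p) \<in> borel_measurable lborel" for N
    using mpow mF by (rule borel_measurable_times)
  have i1: "integrable lborel (\<lambda>p. norm (F p))" using int by simp
  have b1: "AE p in lborel. norm (complex_of_real ((fst p * snd p) ^ N) * F p) \<le> norm (F p)" for N
  proof (rule AE_I2)
    fix p :: "real \<times> real"
    show "norm (complex_of_real ((fst p * snd p) ^ N) * F p) \<le> norm (F p)"
    proof (cases "p \<in> {0..1}\<times>{0..1}")
      case True
      then have "0 \<le> fst p * snd p" "fst p * snd p \<le> 1" by (auto intro: mult_le_one)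
      then have "\<bar>(fst p * snd p) ^ N\<bar> \<le> 1" by (simp add: power_le_one)
      then have "norm (complex_of_real ((fst p * snd p) ^ N)) \<le> 1" by (simp only: norm_of_real)
      then show ?thesis by (simp add: norm_mult mult_left_le_one_le)
    qed (simp add: F0)
  qed
  have l1: "AE p in lborel. (\<lambda>N. complex_of_real ((fst p * snd p) ^ N) * F p) \<longlonglongrightarrow> 0"
  proof (rule AE_I2)
    fix p :: "real \<times> real"
    show "(\<lambda>N. complex_of_real ((fst p * snd p) ^ N) * F p) \<longlonglongrightarrow> 0"
    proof (cases "p \<in> {0..1}\<times>{0..1}")
      case True
      then have u: "0 \<le> fst p * snd p" "fst p * snd p \<le> 1" by (auto intro: mult_le_one)
      show ?thesis
      proof (cases "fst p * snd p = 1")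
        case True
        then show ?thesis by (simp add: F1)
      next
        case False
        with u have "\<bar>fst p * snd p\<bar> < 1" by auto
        then have "(\<lambda>N. (fst p * snd p) ^ N) \<longlonglongrightarrow> 0" by (rule LIMSEQ_abs_realpow_zero2)
        then have "(\<lambda>N. complex_of_real ((fst p * snd p) ^ N)) \<longlonglongrightarrow> 0"
          by (metis of_real_0 tendsto_of_real)
        then show ?thesis by (intro tendsto_mult_left_zero)
      qed
    qed (simp add: F0)
  qed
  have m0: "(\<lambda>p::real\<times>real. 0::complex) \<in> borel_measurable lborel" by simp
  have "(\<lambda>N. integral\<^sup>L lborel (\<lambda>p. complex_of_real ((fst p * snd p) ^ N) * F p)) \<longlonglongrightarrow> integral\<^sup>L lborel (\<lambda>p. 0::complex)"
    using Bochner_Integration.integral_dominated_convergence[OF m0 m1 i1 l1 b1] by simp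
  then show ?thesis by simp
qed

lemma my_alg: "(a::complex) - (1 - c) * a = c * a"
  by (simp add: algebra_simps)

lemma my_alg2: "(x::complex) - (x - y) = y"
  by simp

lemma ln_Suc_diff_tendsto: "(\<lambda>m. ln (real m + 1) - ln (real m)) \<longlonglongrightarrow> 0"
proof -
  have "(\<lambda>m. 1 + inverse (real (Suc m))) \<longlonglongrightarrow> 1 + 0"
    by (intro tendsto_add tendsto_const LIMSEQ_inverse_real_of_nat)
  then have "(\<lambda>m. ln (1 + inverse (real (Suc m)))) \<longlonglongrightarrow> ln (1 + 0)"
    by (rule tendsto_ln) simp
  then have "(\<lambda>m. ln (1 + inverse (real m))) \<longlonglongrightarrow> 0"
    using LIMSEQ_imp_Suc[where f = "\<lambda>m. ln (1 + inverse (real m))" and l = 0] by simp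
  then show ?thesis
  proof (rule Lim_transform_eventually)
    show "\<forall>\<^sub>F m in sequentially. ln (1 + inverse (real m)) = ln (real m + 1) - ln (real m)"
      using eventually_gt_at_top[of "0::nat"]
    proof eventually_elim
      case (elim m)
      then have "1 + inverse (real m) = (real m + 1) / real m" by (simp add: field_simps)
      then show ?case using elim by (simp add: ln_div)
    qed
  qed
qed

theorem main_thm:
  fixes s :: complex
  assumes "set_integrable (lborel :: (real \<times> real) measure) ({0..1} \<times> {0..1}) (Gf s)"
  shows "Digamma s = (LINT p : {0..1} \<times> {0..1} | (lborel :: (real \<times> real) measure). Gf s p)"
proof -
  let ?S = "{0..1::real}\<times>{0..1::real}"
  let ?F = "\<lambda>p. indicator ?S p *\<^sub>R Gf s p"
  have int: "integrable lborel ?F" using assms by (simp add: set_integrable_def)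
  have mF: "?F \<in> borel_measurable lborel" using int by auto
  have s: "0 < Re s" by (rule Re_pos[OF int])
  have mpow: "(\<lambda>p::real\<times>real. complex_of_real ((fst p * snd p) ^ N)) \<in> borel_measurable lborel" for N
    by (simp, rule borel_measurable_continuous_onI, intro continuous_intros)
  define a where "a N = complex_of_real (ln (real N + 1)) - (\<Sum>n<N. 1 / (s + of_nat n))" for N
  have main: "has_bochner_integral lborel (\<lambda>p. (1 - complex_of_real ((fst p * snd p) ^ N)) * ?F p) (a N)" for N
  proof -
    have hb: "has_bochner_integral lborel
      (\<lambda>p. indicator ?S p *\<^sub>R ((\<lambda>_. 1) (snd p) *\<^sub>R (pw (s - 1) (fst p * snd p) * complex_of_real (cN N (fst p * snd p))))
         - complex_of_real (indicator ?S p * (max (snd p) 0 * cN N (fst p * snd p))))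
      (- (\<Sum>n<N. 1 / (s + of_nat n)) - complex_of_real (- ln (real N + 1)))"
      by (intro has_bochner_integral_diff A_int[OF s] has_bochner_integral_of_real B_int)
    have X: "- (\<Sum>n<N. 1 / (s + of_nat n)) - complex_of_real (- ln (real N + 1)) = a N"
      by (simp add: a_def)
    show ?thesis using hb
    proof (rule has_bochner_integral_cong[OF refl _ X, THEN iffD1, rotated])
      fix p :: "real \<times> real"
      show "indicator ?S p *\<^sub>R ((\<lambda>_. 1) (snd p) *\<^sub>R (pw (s - 1) (fst p * snd p) * complex_of_real (cN N (fst p * snd p))))
         - complex_of_real (indicator ?S p * (max (snd p) 0 * cN N (fst p * snd p)))
         = (1 - complex_of_real ((fst p * snd p) ^ N)) * ?F p"
      proof (cases "p \<in> ?S")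
        case True
        have i: "indicator ?S p = (1::real)" using True by simp
        show ?thesis using decomp[OF True, of N s] by (simp only: i scaleR_one mult_1)
      qed simp
    qed
  qed
  have tail: "(\<lambda>N. integral\<^sup>L lborel (\<lambda>p. complex_of_real ((fst p * snd p) ^ N) * ?F p)) \<longlonglongrightarrow> 0"
  proof (rule tailL[OF int])
    fix p :: "real \<times> real"
    show "p \<notin> ?S \<Longrightarrow> ?F p = 0" by simp
    show "fst p * snd p = 1 \<Longrightarrow> ?F p = 0" by (cases p) (simp add: Gf_def)
  qed
  have eq: "a N = integral\<^sup>L lborel ?F - integral\<^sup>L lborel (\<lambda>p. complex_of_real ((fst p * snd p) ^ N) * ?F p)" for N
  proof -
    have iM: "integrable lborel (\<lambda>p. (1 - complex_of_real ((fst p * snd p) ^ N)) * ?F p)"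
      and vM: "integral\<^sup>L lborel (\<lambda>p. (1 - complex_of_real ((fst p * snd p) ^ N)) * ?F p) = a N"
      using main[of N, unfolded has_bochner_integral_iff] by (rule conjunct1, rule conjunct2)
    have fe: "(\<lambda>p. complex_of_real ((fst p * snd p) ^ N) * ?F p)
        = (\<lambda>p. ?F p - (1 - complex_of_real ((fst p * snd p) ^ N)) * ?F p)"
      by (rule ext, rule sym, rule my_alg)
    have hX: "integral\<^sup>L lborel (\<lambda>p. complex_of_real ((fst p * snd p) ^ N) * ?F p) = integral\<^sup>L lborel ?F - a N"
      unfolding fe vM[symmetric] by (rule Bochner_Integration.integral_diff[OF int iM])
    show ?thesis unfolding hX by (rule my_alg2[symmetric])
  qed
  have lim1: "a \<longlonglongrightarrow> integral\<^sup>L lborel ?F - 0"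
  proof -
    have "(\<lambda>N. integral\<^sup>L lborel ?F - integral\<^sup>L lborel (\<lambda>p. complex_of_real ((fst p * snd p) ^ N) * ?F p))
        \<longlonglongrightarrow> integral\<^sup>L lborel ?F - 0"
      by (rule tendsto_diff[OF tendsto_const tail])
    moreover have "a = (\<lambda>N. integral\<^sup>L lborel ?F - integral\<^sup>L lborel (\<lambda>p. complex_of_real ((fst p * snd p) ^ N) * ?F p))"
      by (rule ext, rule eq)
    ultimately show ?thesis by (simp only:)
  qed
  have lim2: "a \<longlonglongrightarrow> Digamma s"
  proof -
    have s0: "s \<noteq> 0" using s by auto
    have "(\<lambda>m. complex_of_real (ln (real m)) - (\<Sum>n<m. inverse (s + of_nat n))
              + complex_of_real (ln (real m + 1) - ln (real m))) \<longlonglongrightarrow> Digamma s + complex_of_real 0"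
      by (intro tendsto_add Digamma_LIMSEQ[OF s0] tendsto_of_real ln_Suc_diff_tendsto)
    then have "(\<lambda>m. complex_of_real (ln (1 + real m)) - (\<Sum>n<m. 1 / (s + of_nat n))) \<longlonglongrightarrow> Digamma s"
      by (simp add: inverse_eq_divide algebra_simps)
    moreover have "a = (\<lambda>m. complex_of_real (ln (1 + real m)) - (\<Sum>n<m. 1 / (s + of_nat n)))"
      by (rule ext) (simp add: a_def add.commute)
    ultimately show ?thesis by simp
  qed
  have "Digamma s = integral\<^sup>L lborel ?F"
    using LIMSEQ_unique[OF lim2 lim1] by simp
  then show ?thesis unfolding set_lebesgue_integral_def .
qed


theorem theorem3p7:
  fixes s :: complex
  assumes "set_integrable (lborel :: (real \<times> real) measure) ({0..1} \<times> {0..1})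
             (\<lambda>(x, y). ((complex_of_real (x * y)) powr (s - 1) - complex_of_real y)
                        / complex_of_real ((1 - x * y) * ln (x * y)))"
  shows "Digamma s =
           (LINT p : {0..1} \<times> {0..1} | (lborel :: (real \<times> real) measure).
              (\<lambda>(x, y). ((complex_of_real (x * y)) powr (s - 1) - complex_of_real y)
                        / complex_of_real ((1 - x * y) * ln (x * y))) p)"
  by (rule main_thm[of s, unfolded Gf_def, OF assms])

end
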